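(* Let $(D_d)_{d\in\mathbb{N}}$ be an arbitrary sequence of open sets $D_d\subset\mathbb{R}^d$ with $\lambda_d(D_d)=1$, let $(L_d)$ be positive numbers and let \[ \overline{C}_d^0(L)=\{f|_{D_d} \mid f\colon\mathbb{R}^d\to\mathbb{R},\ \sup_{x\in\mathbb R^d}|f(x)|\le 1,\ \operatorname{Lip}(f)\le L_d\}. \] Then \[ n\bigl(\varepsilon,\overline{C}_d^0(L)\bigr)\ge (1-a\varepsilon)\Bigl(\frac{aL_d\sqrt d}{3\sqrt{2e\pi}}\Bigr)^d \] for all $a\ge1$, $\varepsilon\in(0,1/a)$ and $d\in\mathbb{N}$. Consequently, the curse of dimensionality holds for $(\overline{C}_d^0(L))_d$ if $\limsup_{d\to\infty}L_d\sqrt d>0$.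
   Context: $\operatorname{Lip}(f)=\sup_{x\ne y}|f(x)-f(y)|/\|x-y\|_2$. Integration problem: approximate $S_d(f)=\int_{D_d}f(x)\,dx$ for $f\in F_d$ by algorithms $A_{n,d}(f)=\phi_{n,d}(f(x_1),\dots,f(x_n))$ with points $x_j\in D_d$ possibly adaptively chosen and arbitrary $\phi_{n,d}\colon\mathbb R^n\to\mathbb R$. Worst-case error $e(A_{n,d})=\sup_{f\in F_d}|S_d(f)-A_{n,d}(f)|$; information complexity $n(\varepsilon,F_d)$ is the minimal $n$ such that some $A_{n,d}$ has error $\le\varepsilon$. The curse of dimensionality holds if there exist $c,\varepsilon_0,\gamma>0$ with $n(\varepsilon,F_d)\ge c(1+\gamma)^d$ for all $\varepsilon\le\varepsilon_0$ and infinitely many $d$. *)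

theory Defs
  imports "HOL-Analysis.Analysis" "HOL-Probability.Probability"
begin

text \<open>R^d is represented by functions nat => real that are extensional on {..<d}
  (the set PiE {..<d} (\<lambda>_. UNIV)); lambda_d is the product Lebesgue measure.\<close>

definition Rd :: "nat \<Rightarrow> (nat \<Rightarrow> real) set" where
  "Rd d = PiE {..<d} (\<lambda>_. UNIV)"

definition lebesgue_d :: "nat \<Rightarrow> (nat \<Rightarrow> real) measure" where
  "lebesgue_d d = PiM {..<d} (\<lambda>_. lborel)"

definition norm2 :: "nat \<Rightarrow> (nat \<Rightarrow> real) \<Rightarrow> real" where
  "norm2 d x = sqrt (\<Sum>i<d. (x i)\<^sup>2)"

definition lip_le :: "nat \<Rightarrow> real \<Rightarrow> ((nat \<Rightarrow> real) \<Rightarrow> real) \<Rightarrow> bool" where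
  "lip_le d L f \<longleftrightarrow> (\<forall>x\<in>Rd d. \<forall>y\<in>Rd d. x \<noteq> y \<longrightarrow> \<bar>f x - f y\<bar> / norm2 d (\<lambda>i. x i - y i) \<le> L)"

definition lip_class :: "nat \<Rightarrow> (nat \<Rightarrow> real) set \<Rightarrow> real \<Rightarrow> ((nat \<Rightarrow> real) \<Rightarrow> real) set" where
  "lip_class d D L = {restrict f D | f. (\<forall>x\<in>Rd d. \<bar>f x\<bar> \<le> 1) \<and> lip_le d L f}"

definition integ :: "nat \<Rightarrow> (nat \<Rightarrow> real) set \<Rightarrow> ((nat \<Rightarrow> real) \<Rightarrow> real) \<Rightarrow> real" where
  "integ d D f = (LINT x:D|lebesgue_d d. f x)"

fun info :: "(nat \<Rightarrow> real list \<Rightarrow> (nat \<Rightarrow> real)) \<Rightarrow> ((nat \<Rightarrow> real) \<Rightarrow> real) \<Rightarrow> nat \<Rightarrow> real list" where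
  "info pt f 0 = []"
| "info pt f (Suc k) = info pt f k @ [f (pt k (info pt f k))]"

definition alg :: "(nat \<Rightarrow> real list \<Rightarrow> (nat \<Rightarrow> real)) \<Rightarrow> (real list \<Rightarrow> real) \<Rightarrow> nat \<Rightarrow> ((nat \<Rightarrow> real) \<Rightarrow> real) \<Rightarrow> real" where
  "alg pt phi n f = phi (info pt f n)"

definition wc_error :: "nat \<Rightarrow> (nat \<Rightarrow> real) set \<Rightarrow> ((nat \<Rightarrow> real) \<Rightarrow> real) set \<Rightarrow>
    (nat \<Rightarrow> real list \<Rightarrow> (nat \<Rightarrow> real)) \<Rightarrow> (real list \<Rightarrow> real) \<Rightarrow> nat \<Rightarrow> ereal" where
  "wc_error d D F pt phi n = (SUP f\<in>F. ereal \<bar>integ d D f - alg pt phi n f\<bar>)"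

text \<open>Information complexity n(eps, F_d); infinity if no algorithm achieves eps.\<close>
definition info_compl :: "nat \<Rightarrow> (nat \<Rightarrow> real) set \<Rightarrow> real \<Rightarrow> ((nat \<Rightarrow> real) \<Rightarrow> real) set \<Rightarrow> ereal" where
  "info_compl d D eps F = (INF n\<in>{n. \<exists>pt phi. (\<forall>k ys. pt k ys \<in> D) \<and> wc_error d D F pt phi n \<le> ereal eps}.
       ereal (real n))"

definition curse :: "(nat \<Rightarrow> (nat \<Rightarrow> real) set) \<Rightarrow> (nat \<Rightarrow> ((nat \<Rightarrow> real) \<Rightarrow> real) set) \<Rightarrow> bool" where
  "curse D F \<longleftrightarrow> (\<exists>c eps0 \<gamma>. c > 0 \<and> eps0 > 0 \<and> \<gamma> > 0 \<and>
     (\<forall>eps. 0 < eps \<and> eps \<le> eps0 \<longrightarrow>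
        (\<exists>\<^sub>\<infinity>d. ereal (c * (1 + \<gamma>) ^ d) \<le> info_compl d (D d) eps (F d))))"

end

theory Submission
  imports Defs
begin


lemma norm2_L2: "norm2 d x = L2_set x {..<d}"
  by (simp add: norm2_def L2_set_def)

lemma norm2_nonneg: "0 \<le> norm2 d x"
  by (simp add: norm2_def sum_nonneg)

lemma norm2_lip: "\<bar>norm2 d (\<lambda>i. x i - p i) - norm2 d (\<lambda>i. y i - p i)\<bar> \<le> norm2 d (\<lambda>i. x i - y i)"
proof -
  have 1: "norm2 d (\<lambda>i. x i - p i) \<le> norm2 d (\<lambda>i. x i - y i) + norm2 d (\<lambda>i. y i - p i)"
    using L2_set_triangle_ineq[of "\<lambda>i. x i - y i" "\<lambda>i. y i - p i" "{..<d}"]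
    by (simp add: norm2_L2)
  have 2: "norm2 d (\<lambda>i. y i - p i) \<le> norm2 d (\<lambda>i. y i - x i) + norm2 d (\<lambda>i. x i - p i)"
    using L2_set_triangle_ineq[of "\<lambda>i. y i - x i" "\<lambda>i. x i - p i" "{..<d}"]
    by (simp add: norm2_L2)
  have 3: "norm2 d (\<lambda>i. y i - x i) = norm2 d (\<lambda>i. x i - y i)"
    by (simp add: norm2_def power2_commute)
  show ?thesis using 1 2 3 by linarith
qed

lemma Min_lip:
  fixes u v :: "'a \<Rightarrow> real"
  assumes "finite A" "A \<noteq> {}" "\<And>a. a \<in> A \<Longrightarrow> \<bar>u a - v a\<bar> \<le> c"
  shows "\<bar>Min (u ` A) - Min (v ` A)\<bar> \<le> c"
proof -
  have "Min (v ` A) \<in> v ` A" using assms by (intro Min_in) auto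
  then obtain a where a: "a \<in> A" "Min (v ` A) = v a" by auto
  have "Min (u ` A) \<in> u ` A" using assms by (intro Min_in) auto
  then obtain b where b: "b \<in> A" "Min (u ` A) = u b" by auto
  have "Min (u ` A) \<le> u a" using a assms by auto
  moreover have "Min (v ` A) \<le> v b" using b assms by auto
  ultimately show ?thesis using assms(3)[OF a(1)] assms(3)[OF b(1)] a b by linarith
qed



lemma space_lebesgue_d: "space (lebesgue_d d) = Rd d"
  by (simp add: lebesgue_d_def Rd_def space_PiM)

lemma nd_int: "(\<integral>\<^sup>+ y. ennreal (c * normal_density m s y) \<partial>lborel) = ennreal c" if "c \<ge> 0" "s > 0"
proof -
  have "(\<integral>\<^sup>+ y. ennreal (c * normal_density m s y) \<partial>lborel) = (\<integral>\<^sup>+ y. ennreal c * ennreal (normal_density m s y) \<partial>lborel)"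
    using that by (simp add: ennreal_mult)
  also have "\<dots> = ennreal c * (\<integral>\<^sup>+ y. ennreal (normal_density m s y) \<partial>lborel)"
    by (rule nn_integral_cmult) simp
  also have "(\<integral>\<^sup>+ y. ennreal (normal_density m s y) \<partial>lborel) = 1"
    using that by (subst nn_integral_eq_integral) auto
  finally show ?thesis by simp
qed

lemma ball_vol:
  assumes "d \<ge> 1" "r > 0"
  shows "emeasure (lebesgue_d d) {x \<in> space (lebesgue_d d). norm2 d (\<lambda>i. x i - p i) < r}
     \<le> ennreal ((sqrt (2 * exp 1 * pi) * r / sqrt d) ^ d)"
proof -
  define M where "M = lebesgue_d d"
  define \<sigma> where "\<sigma> = r / sqrt d"
  define c where "c = sqrt (2 * pi * \<sigma>\<^sup>2)"
  define B where "B = {x \<in> space M. norm2 d (\<lambda>i. x i - p i) < r}"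
  have dpos: "real d > 0" using assms by simp
  have sp: "\<sigma> > 0" using assms by (simp add: \<sigma>_def)
  have cp: "c > 0" unfolding c_def using sp by (intro real_sqrt_gt_zero mult_pos_pos) auto
  have s2: "2 * \<sigma>\<^sup>2 = 2 * r\<^sup>2 / d" using dpos by (simp add: \<sigma>_def power_divide)
  have Bm: "B \<in> sets M"
    unfolding B_def M_def lebesgue_d_def norm2_def by measurable
  interpret P: product_sigma_finite "\<lambda>_::nat. lborel :: real measure"
    by (simp add: product_sigma_finite_def lborel.sigma_finite_measure_axioms)
  have ptw: "indicator B x \<le> ennreal (exp (d/2)) * (\<Prod>i<d. ennreal (c * normal_density (p i) \<sigma> (x i)))"
    if x: "x \<in> space M" for x
  proof (cases "x \<in> B")
    case False then show ?thesis by simp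
  next
    case True
    define S where "S = (\<Sum>i<d. (x i - p i)\<^sup>2)"
    have "sqrt S < r" using True by (simp add: B_def norm2_def S_def)
    moreover have "S \<ge> 0" by (simp add: S_def sum_nonneg)
    ultimately have "(sqrt S)\<^sup>2 < r\<^sup>2" by (intro power_strict_mono) auto
    hence Sr: "S < r\<^sup>2" using \<open>S \<ge> 0\<close> by simp
    have e: "c * normal_density (p i) \<sigma> (x i) = exp (- (x i - p i)\<^sup>2 / (2 * \<sigma>\<^sup>2))" for i
      using cp sp by (simp add: normal_density_def c_def)
    have "(\<Prod>i<d. c * normal_density (p i) \<sigma> (x i)) = exp (\<Sum>i<d. - (x i - p i)\<^sup>2 / (2 * \<sigma>\<^sup>2))"
      by (simp add: e exp_sum)
    also have "(\<Sum>i<d. - (x i - p i)\<^sup>2 / (2 * \<sigma>\<^sup>2)) = - S * d / (2 * r\<^sup>2)"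
      unfolding S_def s2 by (simp add: sum_divide_distrib[symmetric] sum_negf sum_distrib_right)
    finally have pr: "(\<Prod>i<d. c * normal_density (p i) \<sigma> (x i)) = exp (- S * d / (2 * r\<^sup>2))" .
    have "- S * d / (2 * r\<^sup>2) > - (d/2)"
    proof -
      have "S * d < r\<^sup>2 * d" using Sr dpos by simp
      thus ?thesis using assms by (simp add: field_simps)
    qed
    hence "1 \<le> exp (d/2) * exp (- S * d / (2 * r\<^sup>2))"
      by (simp add: exp_add[symmetric])
    hence "ennreal 1 \<le> ennreal (exp (d/2) * (\<Prod>i<d. c * normal_density (p i) \<sigma> (x i)))"
      by (simp add: pr)
    also have "\<dots> = ennreal (exp (d/2)) * ennreal (\<Prod>i<d. c * normal_density (p i) \<sigma> (x i))"
      using cp by (intro ennreal_mult) (auto intro!: prod_nonneg)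
    also have "ennreal (\<Prod>i<d. c * normal_density (p i) \<sigma> (x i)) = (\<Prod>i<d. ennreal (c * normal_density (p i) \<sigma> (x i)))"
      using cp by (intro prod_ennreal[symmetric]) auto
    finally show ?thesis using True by simp
  qed
  have "emeasure M B = (\<integral>\<^sup>+ x. indicator B x \<partial>M)"
    using Bm by simp
  also have "\<dots> \<le> (\<integral>\<^sup>+ x. ennreal (exp (d/2)) * (\<Prod>i<d. ennreal (c * normal_density (p i) \<sigma> (x i))) \<partial>M)"
    by (rule nn_integral_mono) (rule ptw)
  also have "\<dots> = ennreal (exp (d/2)) * (\<integral>\<^sup>+ x. (\<Prod>i<d. ennreal (c * normal_density (p i) \<sigma> (x i))) \<partial>M)"
    by (rule nn_integral_cmult) (unfold M_def lebesgue_d_def, measurable)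
  also have "(\<integral>\<^sup>+ x. (\<Prod>i<d. ennreal (c * normal_density (p i) \<sigma> (x i))) \<partial>M)
      = (\<Prod>i<d. \<integral>\<^sup>+ y. ennreal (c * normal_density (p i) \<sigma> y) \<partial>lborel)"
    unfolding M_def lebesgue_d_def by (rule P.product_nn_integral_prod) auto
  also have "\<dots> = ennreal c ^ d"
    using cp sp by (simp add: nd_int)
  also have "ennreal (exp (d/2)) * ennreal c ^ d = ennreal (exp (d/2) * c ^ d)"
    using cp by (simp add: ennreal_mult ennreal_power)
  also have "exp (d/2) * c ^ d = (sqrt (2 * exp 1 * pi) * r / sqrt d) ^ d"
  proof -
    have h: "sqrt (exp 1) = exp (1/2)"
      by (intro real_sqrt_unique) (auto simp: power2_eq_square exp_add[symmetric])
    have "exp (d/2) = sqrt (exp 1) ^ d"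
      unfolding h using exp_of_nat_mult[of d "1/2"] by simp
    moreover have "c = sqrt (2 * pi) * r / sqrt d"
      using sp assms by (simp add: c_def \<sigma>_def real_sqrt_mult real_sqrt_divide)
    moreover have "sqrt (2*exp 1*pi) = sqrt (exp 1) * sqrt (2*pi)" by (simp add: real_sqrt_mult[symmetric] mult_ac)
    ultimately show ?thesis
      by (simp add: power_mult_distrib[symmetric] mult_ac)
  qed
  finally show ?thesis unfolding B_def M_def .
qed



lemma info_zero:
  assumes "\<forall>k<n. g (pt k (replicate k 0)) = 0"
  shows "k \<le> n \<Longrightarrow> info pt g k = replicate k 0"
proof (induction k)
  case 0 then show ?case by simp
next
  case (Suc k)
  then have "info pt g k = replicate k 0" by simp
  moreover have "g (pt k (replicate k 0)) = 0" using assms Suc.prems by simp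
  ultimately show ?case by (simp add: replicate_append_same)
qed

lemma lip_from: 
  assumes "\<And>x y. \<bar>f x - f y\<bar> \<le> L * norm2 d (\<lambda>i. x i - y i)" "L > 0"
  shows "lip_le d L f"
  unfolding lip_le_def
proof (intro ballI impI)
  fix x y assume "x \<in> Rd d" "y \<in> Rd d" "x \<noteq> y"
  show "\<bar>f x - f y\<bar> / norm2 d (\<lambda>i. x i - y i) \<le> L"
  proof (cases "norm2 d (\<lambda>i. x i - y i) = 0")
    case True then show ?thesis using assms by simp
  next
    case False
    then have "norm2 d (\<lambda>i. x i - y i) > 0" using norm2_nonneg[of d] by (metis less_eq_real_def)
    then show ?thesis using assms(1)[of x y] by (simp add: divide_le_eq)
  qed
qed



lemma lower:
  assumes d1: "d \<ge> 1" and Dm: "D \<in> sets (lebesgue_d d)" and D1: "emeasure (lebesgue_d d) D = 1"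
   and L: "L > 0" and t: "0 < t" "t \<le> 1" and pt: "\<forall>k ys. pt k ys \<in> D"
  shows "ereal (t * (1 - real n * (sqrt (2*exp 1*pi) * (t/L) / sqrt d)^d)) \<le> wc_error d D (lip_class d D L) pt phi n"
proof -
  define M where "M = lebesgue_d d"
  define V where "V = (sqrt (2*exp 1*pi) * (t/L) / sqrt d)^d"
  have V0: "V \<ge> 0" unfolding V_def using L t by simp
  define p where "p k = pt k (replicate k 0)" for k
  define u where "u x k = (if k = n then t else L * norm2 d (\<lambda>i. x i - p k i))" for x k
  define f where "f x = Min (u x ` {..n})" for x
  have DM: "D \<subseteq> space M" using Dm sets.sets_into_space unfolding M_def by blast
  have u0: "0 \<le> u x k" for x k using L t norm2_nonneg[of d] by (simp add: u_def)
  have f_le: "f x \<le> t" for x unfolding f_def by (rule Min.coboundedI) (auto simp: u_def intro!: image_eqI[of _ _ n])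
  have f_ge: "0 \<le> f x" for x unfolding f_def using u0 by (subst Min_ge_iff) auto
  have f_p: "f (p k) = 0" if "k < n" for k
  proof -
    have "f (p k) \<le> u (p k) k" unfolding f_def using that by (intro Min.coboundedI) auto
    also have "u (p k) k = 0" using that by (simp add: u_def norm2_def)
    finally show ?thesis using f_ge[of "p k"] by simp
  qed
  have f_far: "f x = t" if "\<forall>k<n. t \<le> L * norm2 d (\<lambda>i. x i - p k i)" for x
  proof -
    have "t \<le> f x" unfolding f_def using that by (subst Min_ge_iff) (auto simp: u_def)
    thus ?thesis using f_le[of x] by simp
  qed
  have f_lip: "\<bar>f x - f y\<bar> \<le> L * norm2 d (\<lambda>i. x i - y i)" for x y
    unfolding f_def
  proof (rule Min_lip)
    fix k assume "k \<in> {..n}"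
    show "\<bar>u x k - u y k\<bar> \<le> L * norm2 d (\<lambda>i. x i - y i)"
    proof (cases "k = n")
      case True then show ?thesis using L norm2_nonneg[of d] by (simp add: u_def)
    next
      case False
      have "\<bar>u x k - u y k\<bar> = L * \<bar>norm2 d (\<lambda>i. x i - p k i) - norm2 d (\<lambda>i. y i - p k i)\<bar>"
        using False L by (simp add: u_def abs_mult right_diff_distrib[symmetric])
      also have "\<dots> \<le> L * norm2 d (\<lambda>i. x i - y i)"
        using L norm2_lip by (intro mult_left_mono) auto
      finally show ?thesis .
    qed
  qed auto
  have fab: "\<bar>f x\<bar> \<le> 1" for x using f_le[of x] f_ge[of x] t by simp
  define g1 where "g1 = restrict f D"
  define g2 where "g2 = restrict (\<lambda>x. - f x) D"
  have g1F: "g1 \<in> lip_class d D L"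
    unfolding lip_class_def g1_def
    using fab f_lip L by (auto intro!: exI[of _ f] lip_from)
  have g2F: "g2 \<in> lip_class d D L"
  proof -
    have "\<bar>- f x - - f y\<bar> \<le> L * norm2 d (\<lambda>i. x i - y i)" for x y using f_lip[of x y] by simp
    then show ?thesis
      unfolding lip_class_def g2_def
      using fab L by (auto intro!: exI[of _ "\<lambda>x. - f x"] lip_from)
  qed
  have pD: "p k \<in> D" for k using pt by (simp add: p_def)
  have i1: "info pt g1 n = replicate n 0"
    using info_zero[of n g1 pt n] pD f_p unfolding p_def by (simp add: g1_def)
  have i2: "info pt g2 n = replicate n 0"
    using info_zero[of n g2 pt n] pD f_p unfolding p_def by (simp add: g2_def)
  define v where "v = phi (replicate n 0)"
  define I where "I = integral\<^sup>L M (\<lambda>x. indicator D x * f x)"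
  have I1: "integ d D g1 = I"
    unfolding integ_def I_def M_def set_lebesgue_integral_def g1_def
    by (intro Bochner_Integration.integral_cong) (auto simp: indicator_def)
  have I2: "integ d D g2 = - I"
  proof -
    have "integ d D g2 = integral\<^sup>L M (\<lambda>x. - (indicator D x * f x))"
      unfolding integ_def I_def M_def set_lebesgue_integral_def g2_def
      by (intro Bochner_Integration.integral_cong) (auto simp: indicator_def)
    then show ?thesis by (simp add: I_def)
  qed
  have W1: "ereal \<bar>I - v\<bar> \<le> wc_error d D (lip_class d D L) pt phi n"
    unfolding wc_error_def using g1F I1 i1
    by (intro SUP_upper2[of g1]) (auto simp: alg_def v_def)
  have W2: "ereal \<bar>- I - v\<bar> \<le> wc_error d D (lip_class d D L) pt phi n"
    unfolding wc_error_def using g2F I2 i2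
    by (intro SUP_upper2[of g2]) (auto simp: alg_def v_def)
  have Ibound: "t * (1 - real n * V) \<le> I"
  proof -
    define B where "B k = {x \<in> space M. norm2 d (\<lambda>i. x i - p k i) < t/L}" for k
    have Bm: "B k \<in> sets M" for k
      unfolding B_def M_def lebesgue_d_def norm2_def by measurable
    have Bv: "emeasure M (B k) \<le> ennreal V" for k
      unfolding B_def M_def V_def using ball_vol[OF d1, of "t/L" "p k"] L t by simp
    have fm: "f \<in> borel_measurable M"
    proof -
      have "(\<lambda>x. u x k) \<in> borel_measurable M" for k
        unfolding u_def M_def lebesgue_d_def norm2_def by measurable
      then show ?thesis unfolding f_def
        by (intro borel_measurable_Min) auto
    qed
    have gm: "(\<lambda>x. indicator D x * f x) \<in> borel_measurable M"
      using fm Dm unfolding M_def by measurable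
    define N where "N = (\<integral>\<^sup>+ x. ennreal (indicator D x * f x) \<partial>M)"
    have IN: "I = enn2real N"
      unfolding I_def N_def using gm f_ge by (intro integral_eq_nn_integral) auto
    have ptw: "ennreal t * indicator D x \<le> ennreal (indicator D x * f x) + (\<Sum>k<n. ennreal t * indicator (B k) x)"
      if x: "x \<in> space M" for x
    proof (cases "x \<in> D")
      case False then show ?thesis by simp
    next
      case True
      show ?thesis
      proof (cases "\<exists>k<n. x \<in> B k")
        case True
        then obtain k where k: "k < n" "x \<in> B k" by auto
        have "ennreal t * indicator D x \<le> ennreal t * indicator (B k) x"
          using k by (simp add: indicator_def)
        also have "\<dots> \<le> (\<Sum>k<n. ennreal t * indicator (B k) x)"
          using k by (intro member_le_sum) auto
        also have "\<dots> \<le> ennreal (indicator D x * f x) + (\<Sum>k<n. ennreal t * indicator (B k) x)"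
          by simp
        finally show ?thesis .
      next
        case False
        have "t \<le> L * norm2 d (\<lambda>i. x i - p k i)" if "k < n" for k
          using False that x L by (auto simp: B_def field_simps)
        hence "f x = t" by (intro f_far) auto
        then show ?thesis using \<open>x \<in> D\<close> by simp
      qed
    qed
    have "ennreal t = (\<integral>\<^sup>+ x. ennreal t * indicator D x \<partial>M)"
      using Dm D1 unfolding M_def by (simp add: nn_integral_cmult_indicator)
    also have "\<dots> \<le> (\<integral>\<^sup>+ x. ennreal (indicator D x * f x) + (\<Sum>k<n. ennreal t * indicator (B k) x) \<partial>M)"
      by (rule nn_integral_mono) (rule ptw)
    also have "\<dots> = N + (\<integral>\<^sup>+ x. (\<Sum>k<n. ennreal t * indicator (B k) x) \<partial>M)"
      unfolding N_def using gm Bm by (intro nn_integral_add) auto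
    also have "(\<integral>\<^sup>+ x. (\<Sum>k<n. ennreal t * indicator (B k) x) \<partial>M) = (\<Sum>k<n. ennreal t * emeasure M (B k))"
      using Bm by (subst nn_integral_sum) (auto simp: nn_integral_cmult_indicator)
    also have "\<dots> \<le> (\<Sum>k<n. ennreal t * ennreal V)"
      using Bv by (intro sum_mono mult_left_mono) auto
    also have "\<dots> = ennreal (real n * t * V)"
      using t V0 by (simp add: ennreal_mult[symmetric] ennreal_of_nat_eq_real_of_nat)
    finally have 1: "ennreal t \<le> N + ennreal (real n * t * V)" by simp
    have "N \<le> (\<integral>\<^sup>+ x. ennreal t * indicator D x \<partial>M)"
      unfolding N_def using f_le by (intro nn_integral_mono) (auto simp: indicator_def intro: ennreal_leI)
    also have "\<dots> = ennreal t"
      using Dm D1 unfolding M_def by (simp add: nn_integral_cmult_indicator)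
    finally have "N \<noteq> \<top>" by (auto simp: top_unique)
    hence "N = ennreal (enn2real N)" by (simp add: ennreal_enn2real_if)
    with 1 have "ennreal t \<le> ennreal (enn2real N + real n * t * V)"
      using t V0 by (metis ennreal_plus enn2real_nonneg mult_nonneg_nonneg of_nat_0_le_iff less_eq_real_def)
    hence "t \<le> enn2real N + real n * t * V"
      using t V0 by (subst (asm) ennreal_le_iff) (auto intro: add_nonneg_nonneg)
    then show ?thesis unfolding IN by (simp add: algebra_simps)
  qed
  have "t * (1 - real n * V) \<le> \<bar>I - v\<bar> \<or> t * (1 - real n * V) \<le> \<bar>- I - v\<bar>" using Ibound by linarith
  then have "ereal (t * (1 - real n * V)) \<le> wc_error d D (lip_class d D L) pt phi n"
    using W1 W2 by (metis ereal_less_eq(3) order_trans)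
  then show ?thesis unfolding V_def .
qed



lemma part1:
  assumes d1: "d \<ge> 1" and D1: "emeasure (lebesgue_d d) D = 1" and L: "L > 0"
    and a: "a \<ge> 1" and e: "0 < eps" "eps < 1 / a"
  shows "ereal ((1 - a * eps) * ((a * L * sqrt (real d)) / (3 * sqrt (2 * exp 1 * pi))) ^ d)
              \<le> info_compl d D eps (lip_class d D L)"
  unfolding info_compl_def
proof (rule INF_greatest)
  fix n assume "n \<in> {n. \<exists>pt phi. (\<forall>k ys. pt k ys \<in> D) \<and> wc_error d D (lip_class d D L) pt phi n \<le> ereal eps}"
  then obtain pt phi where pt: "\<forall>k ys. pt k ys \<in> D" and w: "wc_error d D (lip_class d D L) pt phi n \<le> ereal eps"
    by auto
  have Dm: "D \<in> sets (lebesgue_d d)" using D1 emeasure_notin_sets by fastforce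
  define t where "t = 1 / a"
  define Y where "Y = sqrt (2*exp 1*pi) * (t/L) / sqrt d"
  define X where "X = (a * L * sqrt (real d)) / (3 * sqrt (2 * exp 1 * pi))"
  have t0: "0 < t" "t \<le> 1" using a by (auto simp: t_def)
  have Y0: "Y > 0" using t0 L d1 by (simp add: Y_def)
  have "ereal (t * (1 - real n * Y^d)) \<le> ereal eps"
    using lower[OF d1 Dm D1 L t0 pt, of n phi] w unfolding Y_def by (rule order_trans)
  hence "t * (1 - real n * Y^d) \<le> eps" by simp
  hence "1 - real n * Y^d \<le> a * eps" using a by (simp add: t_def field_simps)
  hence 1: "1 - a * eps \<le> real n * Y^d" by simp
  have ae: "0 \<le> 1 - a * eps" using e a by (simp add: field_simps)
  have "X \<le> 1 / Y"
  proof -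
    have "1 / Y = a * L * sqrt d / sqrt (2 * exp 1 * pi)"
      using a L d1 by (simp add: Y_def t_def field_simps)
    moreover have "0 \<le> a * L * sqrt d / sqrt (2 * exp 1 * pi)" using a L by simp
    ultimately show ?thesis unfolding X_def by (simp add: divide_le_eq field_simps)
  qed
  moreover have "0 \<le> X" using a L by (simp add: X_def)
  ultimately have "X^d \<le> (1/Y)^d" by (intro power_mono)
  hence "(1 - a * eps) * X^d \<le> (1 - a * eps) * (1/Y)^d" using ae by (intro mult_left_mono)
  also have "\<dots> \<le> real n"
    using 1 Y0 by (simp add: power_one_over divide_le_eq)
  finally show "ereal ((1 - a * eps) * X ^ d) \<le> ereal (real n)" by simp
qed



theorem proposition3p2:
  fixes D :: "nat \<Rightarrow> (nat \<Rightarrow> real) set" and L :: "nat \<Rightarrow> real"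
  assumes "\<forall>d\<ge>1. openin (top_of_set (Rd d)) (D d)"
    and "\<forall>d\<ge>1. emeasure (lebesgue_d d) (D d) = 1"
    and "\<forall>d\<ge>1. L d > 0"
  shows "(\<forall>a eps d. a \<ge> 1 \<and> 0 < eps \<and> eps < 1 / a \<and> d \<ge> 1 \<longrightarrow>
            ereal ((1 - a * eps) * ((a * L d * sqrt (real d)) / (3 * sqrt (2 * exp 1 * pi))) ^ d)
              \<le> info_compl d (D d) eps (lip_class d (D d) (L d)))
       \<and> (limsup (\<lambda>d. ereal (L d * sqrt (real d))) > 0
            \<longrightarrow> curse D (\<lambda>d. lip_class d (D d) (L d)))"
proof -
  have P1: "\<forall>a eps d. a \<ge> 1 \<and> 0 < eps \<and> eps < 1 / a \<and> d \<ge> 1 \<longrightarrow>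
            ereal ((1 - a * eps) * ((a * L d * sqrt (real d)) / (3 * sqrt (2 * exp 1 * pi))) ^ d)
              \<le> info_compl d (D d) eps (lip_class d (D d) (L d))"
    using assms part1 by blast
  moreover have "curse D (\<lambda>d. lip_class d (D d) (L d))"
    if lim: "limsup (\<lambda>d. ereal (L d * sqrt (real d))) > 0"
  proof -
    have "\<not> (limsup (\<lambda>d. ereal (L d * sqrt (real d))) \<le> 0)" using lim by simp
    then obtain z where z: "z > 0" "\<not> eventually (\<lambda>d. z > ereal (L d * sqrt (real d))) sequentially"
      unfolding Limsup_le_iff by blast
    hence fz: "frequently (\<lambda>d. z \<le> ereal (L d * sqrt (real d))) sequentially"
      by (simp add: not_eventually not_less)
    obtain \<delta> where zd: "z = ereal \<delta>"
    proof (cases z)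
      case PInf
      with fz have "frequently (\<lambda>d. False) sequentially" by simp
      then show ?thesis by simp
    next
      case MInf with z show ?thesis by simp
    qed
    have \<delta>0: "\<delta> > 0" using z zd by simp
    have fd: "frequently (\<lambda>d. \<delta> \<le> L d * sqrt (real d)) sequentially" using fz zd by simp
    define K where "K = 3 * sqrt (2 * exp 1 * pi)"
    have K0: "K > 0" by (simp add: K_def)
    define a where "a = max 1 (2 * K / \<delta>)"
    have a1: "a \<ge> 1" by (simp add: a_def)
    have aK: "a * \<delta> / K \<ge> 2"
    proof -
      have "2 * K / \<delta> \<le> a" by (simp add: a_def)
      thus ?thesis using \<delta>0 K0 by (simp add: field_simps)
    qed
    have key: "\<forall>eps. 0 < eps \<and> eps \<le> 1 / (2 * a) \<longrightarrow>
       (\<exists>\<^sub>\<infinity>d. ereal (1 / 2 * (1 + 1) ^ d) \<le> info_compl d (D d) eps (lip_class d (D d) (L d)))"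
    proof (intro allI impI)
      fix eps assume ep: "0 < eps \<and> eps \<le> 1 / (2 * a)"
      have ae: "1 - a * eps \<ge> 1/2" using ep a1 by (simp add: field_simps)
      have el: "eps < 1 / a" using ep a1 by (simp add: field_simps)
      have ev: "eventually (\<lambda>d. \<delta> \<le> L d * sqrt (real d) \<longrightarrow>
          ereal (1/2 * (1 + 1) ^ d) \<le> info_compl d (D d) eps (lip_class d (D d) (L d))) sequentially"
        unfolding eventually_sequentially
      proof (intro exI[of _ 1] allI impI)
        fix d :: nat assume d1: "d \<ge> 1" and dl: "\<delta> \<le> L d * sqrt (real d)"
        have "2 \<le> a * \<delta> / K" by (rule aK)
        also have "\<dots> \<le> a * L d * sqrt d / K" using dl a1 K0 by (simp add: divide_right_mono)
        finally have X2: "2 \<le> a * L d * sqrt d / K" .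
        have "1/2 * (1 + 1) ^ d \<le> (1 - a * eps) * (a * L d * sqrt d / K) ^ d"
          using ae X2 by (intro mult_mono power_mono) auto
        hence "ereal (1/2 * (1 + 1) ^ d) \<le> ereal ((1 - a * eps) * (a * L d * sqrt d / K) ^ d)" by simp
        also have "\<dots> \<le> info_compl d (D d) eps (lip_class d (D d) (L d))"
          using P1 a1 ep el d1 unfolding K_def by blast
        finally show "ereal (1/2 * (1 + 1) ^ d) \<le> info_compl d (D d) eps (lip_class d (D d) (L d))" .
      qed
      show "\<exists>\<^sub>\<infinity>d. ereal (1 / 2 * (1 + 1) ^ d) \<le> info_compl d (D d) eps (lip_class d (D d) (L d))"
        unfolding cofinite_eq_sequentially using frequently_mp[OF ev fd] .
    qed
    have "(1/2::real) > 0 \<and> 1/(2*a) > 0 \<and> (1::real) > 0" using a1 by simp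
    with key show ?thesis unfolding curse_def by blast
  qed
  ultimately show ?thesis by blast
qed


end
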